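(* Let $0<R<1$ and let $f$ be a circular tractrix with parameter $R$ and constants $c_1^2-c_2^2=1$. Then $f$ is closed, i.e. there exists $P>0$ with $f(t+P)=f(t)$ for all $t\in\mathbb R$, if and only if $\sqrt{1-R^2}\in\mathbb Q$.
   Context: Fix $0<R<1$, $\lambda=\frac{\sqrt{1-R^2}}{R}$, and real constants $c_1,c_2$ with $c_1^2-c_2^2=1$. The circular tractrix is $f(t)=\big(\xi_1\cos\tfrac tR+\xi_2\sin\tfrac tR,\ -\xi_2\cos\tfrac tR+\xi_1\sin\tfrac tR,\ \xi_3\big)$, $t\in\mathbb R$, with $\xi_1=\frac{(R-\frac1R)\cos\lambda t}{\frac{c_1}{R}+\cos\lambda t}$, $\xi_2=-\frac{\lambda\sin\lambda t}{\frac{c_1}{R}+\cos\lambda t}$, $\xi_3=\frac{\lambda c_2}{\frac{c_1}{R}+\cos\lambda t}$. *)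

theory Defs
  imports Complex_Main
begin

definition tr_lambda :: "real \<Rightarrow> real" where
  "tr_lambda R = sqrt (1 - R\<^sup>2) / R"

definition tr_xi1 :: "real \<Rightarrow> real \<Rightarrow> real \<Rightarrow> real" where
  "tr_xi1 R c1 t = ((R - 1 / R) * cos (tr_lambda R * t)) / (c1 / R + cos (tr_lambda R * t))"

definition tr_xi2 :: "real \<Rightarrow> real \<Rightarrow> real \<Rightarrow> real" where
  "tr_xi2 R c1 t = - (tr_lambda R * sin (tr_lambda R * t)) / (c1 / R + cos (tr_lambda R * t))"

definition tr_xi3 :: "real \<Rightarrow> real \<Rightarrow> real \<Rightarrow> real \<Rightarrow> real" where
  "tr_xi3 R c1 c2 t = (tr_lambda R * c2) / (c1 / R + cos (tr_lambda R * t))"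

definition circular_tractrix :: "real \<Rightarrow> real \<Rightarrow> real \<Rightarrow> real \<Rightarrow> real \<times> real \<times> real" where
  "circular_tractrix R c1 c2 t =
     (tr_xi1 R c1 t * cos (t / R) + tr_xi2 R c1 t * sin (t / R),
      - tr_xi2 R c1 t * cos (t / R) + tr_xi1 R c1 t * sin (t / R),
      tr_xi3 R c1 c2 t)"

end

theory Submission imports Defs begin
lemma denom_nz:
  fixes R c1 c2 u :: real
  assumes "0 < R" "R < 1" "c1\<^sup>2 - c2\<^sup>2 = 1"
  shows "c1 / R + cos u \<noteq> 0"
proof -
  have "c1\<^sup>2 \<ge> 1" using assms(3) by (smt (verit) zero_le_power2)
  hence "\<bar>c1\<bar> \<ge> 1" using abs_le_square_iff[of 1 c1] by simp
  hence "\<bar>c1\<bar> / R > 1" using assms(1,2) by (simp add: less_divide_eq)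
  hence "\<bar>c1 / R\<bar> > 1" using assms(1) by simp
  moreover have "\<bar>cos u\<bar> \<le> 1" by simp
  ultimately show ?thesis by linarith
qed

lemma lam_sq: "0 < R \<Longrightarrow> R < 1 \<Longrightarrow> (tr_lambda R)\<^sup>2 = (1 - R\<^sup>2) / R\<^sup>2"
  unfolding tr_lambda_def using power_le_one[of R 2] by (simp add: power_divide)
lemma normsq:
  fixes R c1 c2 t :: real
  assumes "0 < R" "R < 1" "c1\<^sup>2 - c2\<^sup>2 = 1"
  shows "(tr_xi1 R c1 t)\<^sup>2 + (tr_xi2 R c1 t)\<^sup>2 + (tr_xi3 R c1 c2 t)\<^sup>2
     = (1 - R\<^sup>2) * (c1 / R - cos (tr_lambda R * t)) / (c1 / R + cos (tr_lambda R * t))"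
proof -
  define x where "x = cos (tr_lambda R * t)"
  define y where "y = sin (tr_lambda R * t)"
  define L where "L = tr_lambda R"
  define d where "d = c1 / R + x"
  have d: "d \<noteq> 0" unfolding d_def x_def using denom_nz[OF assms] .
  have xy: "y\<^sup>2 = 1 - x\<^sup>2" unfolding x_def y_def by (simp add: sin_squared_eq)
  have L2: "L\<^sup>2 = (1 - R\<^sup>2) / R\<^sup>2" unfolding L_def using lam_sq assms by simp
  have c2: "c2\<^sup>2 = c1\<^sup>2 - 1" using assms(3) by simp
  have key: "(R - 1/R)\<^sup>2 * x\<^sup>2 + L\<^sup>2 * y\<^sup>2 + L\<^sup>2 * c2\<^sup>2 = (1 - R\<^sup>2) * (c1/R - x) * d"
  proof -
    have e1: "(R - 1/R)\<^sup>2 = (1 - R\<^sup>2) / R\<^sup>2 * (1 - R\<^sup>2)"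
      using assms(1) by (simp add: power2_eq_square field_simps)
    have e2: "(c1/R - x) * (c1/R + x) = (c1\<^sup>2 - R\<^sup>2 * x\<^sup>2) / R\<^sup>2"
      using assms(1) by (simp add: power2_eq_square field_simps)
    have "(R - 1/R)\<^sup>2 * x\<^sup>2 + L\<^sup>2 * y\<^sup>2 + L\<^sup>2 * c2\<^sup>2
        = (1 - R\<^sup>2) / R\<^sup>2 * ((1 - R\<^sup>2) * x\<^sup>2 + (1 - x\<^sup>2) + (c1\<^sup>2 - 1))"
    proof -
      have gen: "\<And>k::real. k*(1-R\<^sup>2)*x\<^sup>2 + k*(1-x\<^sup>2) + k*(c1\<^sup>2-1) = k*((1-R\<^sup>2)*x\<^sup>2+(1-x\<^sup>2)+(c1\<^sup>2-1))"
        by (simp add: algebra_simps)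
      show ?thesis unfolding e1 L2 xy c2 by (rule gen)
    qed
    also have "\<dots> = (1 - R\<^sup>2) * ((c1\<^sup>2 - R\<^sup>2 * x\<^sup>2) / R\<^sup>2)"
    proof -
      have "(1-R\<^sup>2)*x\<^sup>2+(1-x\<^sup>2)+(c1\<^sup>2-1) = c1\<^sup>2 - R\<^sup>2*x\<^sup>2" by (simp add: algebra_simps)
      then show ?thesis by simp
    qed
    also have "\<dots> = (1 - R\<^sup>2) * (c1/R - x) * d"
      unfolding d_def mult.assoc e2 ..
    finally show ?thesis .
  qed
  have "(tr_xi1 R c1 t)\<^sup>2 + (tr_xi2 R c1 t)\<^sup>2 + (tr_xi3 R c1 c2 t)\<^sup>2
      = ((R - 1/R)\<^sup>2 * x\<^sup>2 + L\<^sup>2 * y\<^sup>2 + L\<^sup>2 * c2\<^sup>2) / d\<^sup>2"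
    unfolding tr_xi1_def tr_xi2_def tr_xi3_def x_def y_def L_def d_def by (simp add: power_divide power_mult_distrib add_divide_distrib)
  also have "\<dots> = (1 - R\<^sup>2) * (c1/R - x) / d" unfolding key using d by (simp add: power2_eq_square)
  finally show ?thesis unfolding x_def d_def L_def .
qed


lemma rot_sq: "(A*c+B*s)\<^sup>2 + (-B*c+A*s)\<^sup>2 = (A\<^sup>2+B\<^sup>2)*(c\<^sup>2+s\<^sup>2)" for A B c s :: real
  by (simp add: algebra_simps power2_eq_square)

lemma N_eq:
  "(fst (circular_tractrix R c1 c2 t))\<^sup>2 + (fst (snd (circular_tractrix R c1 c2 t)))\<^sup>2
    + (snd (snd (circular_tractrix R c1 c2 t)))\<^sup>2
   = (tr_xi1 R c1 t)\<^sup>2 + (tr_xi2 R c1 t)\<^sup>2 + (tr_xi3 R c1 c2 t)\<^sup>2"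
  unfolding circular_tractrix_def fst_conv snd_conv
  by (simp only: rot_sq[of "tr_xi1 R c1 t" "cos (t/R)" "tr_xi2 R c1 t" "sin (t/R)"] sin_cos_squared_add2 mult_1_right)

lemma cos_shift: "cos (x + 2*pi*of_int k) = cos x" by (simp add: cos_add)
lemma sin_shift: "sin (x + 2*pi*of_int k) = sin x" by (simp add: sin_add)

theorem mainTheorem13:
  fixes R c1 c2 :: real
  assumes "0 < R" and "R < 1" and "c1\<^sup>2 - c2\<^sup>2 = 1"
  shows "(\<exists>P>0. \<forall>t. circular_tractrix R c1 c2 (t + P) = circular_tractrix R c1 c2 t)
         \<longleftrightarrow> sqrt (1 - R\<^sup>2) \<in> \<rat>"
proof
  assume "\<exists>P>0. \<forall>t. circular_tractrix R c1 c2 (t + P) = circular_tractrix R c1 c2 t"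
  then obtain P where P: "P > 0" "\<And>t. circular_tractrix R c1 c2 (t + P) = circular_tractrix R c1 c2 t"
    by blast
  have FP: "circular_tractrix R c1 c2 P = circular_tractrix R c1 c2 0" using P(2)[of 0] by simp
  define L where "L = tr_lambda R"
  define a where "a = c1 / R"
  define cP where "cP = cos (L * P)"
  have R2: "1 - R\<^sup>2 > 0" using assms(1,2) power_strict_mono[of R 1 2] by simp
  have d1: "a + cP \<noteq> 0" unfolding a_def cP_def using denom_nz[OF assms] .
  have d0: "a + 1 \<noteq> 0" unfolding a_def using denom_nz[OF assms, of 0] by simp
  have anz: "a \<noteq> 0"
  proof
    assume "a = 0" then show False using denom_nz[OF assms, of "pi/2"] unfolding a_def by simp
  qed
  have "(1 - R\<^sup>2) * (a - cP) / (a + cP) = (1 - R\<^sup>2) * (a - 1) / (a + 1)"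
    using N_eq[of R c1 c2 P] N_eq[of R c1 c2 0] normsq[OF assms, of P] normsq[OF assms, of 0] FP
    unfolding a_def cP_def L_def by simp
  hence "(a - cP) / (a + cP) = (a - 1) / (a + 1)" using R2 by (metis less_irrefl mult_left_cancel times_divide_eq_right)
  hence "(a - cP) * (a + 1) = (a - 1) * (a + cP)" using d0 d1 by (simp add: field_simps)
  hence "2 * a * (1 - cP) = 0" by (simp add: algebra_simps)
  hence c1P: "cP = 1" using anz by simp
  hence s1P: "sin (L * P) = 0" unfolding cP_def using sin_cos_squared_add[of "L*P"] by simp
  define A where "A = (R - 1 / R) / (a + 1)"
  have "1 / R > 1" using assms(1,2) by simp
  hence "R - 1 / R \<noteq> 0" using assms(2) by linarith
  hence Anz: "A \<noteq> 0" unfolding A_def using d0 by simp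
  have x1P: "tr_xi1 R c1 P = A" and x2P: "tr_xi2 R c1 P = 0"
    using c1P s1P unfolding tr_xi1_def tr_xi2_def A_def a_def cP_def L_def by simp_all
  have x10: "tr_xi1 R c1 0 = A" and x20: "tr_xi2 R c1 0 = 0"
    unfolding tr_xi1_def tr_xi2_def A_def a_def by simp_all
  have "A * cos (P / R) = A"
    using arg_cong[OF FP, of fst] x1P x2P x10 x20 unfolding circular_tractrix_def by simp
  hence "cos (P / R) = 1" using Anz by simp
  then obtain m :: int where m: "P / R = of_int m * 2 * pi" using cos_one_2pi_int by blast
  from c1P obtain n :: int where n: "L * P = of_int n * 2 * pi" unfolding cP_def using cos_one_2pi_int by blast
  have mnz: "m \<noteq> 0" using m P(1) assms(1) by auto
  have "L * P = sqrt (1 - R\<^sup>2) * (P / R)" unfolding L_def tr_lambda_def by simp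
  hence "sqrt (1 - R\<^sup>2) * (of_int m * 2 * pi) = of_int n * 2 * pi" using m n by simp
  hence "sqrt (1 - R\<^sup>2) = of_int n / of_int m" using mnz by (simp add: field_simps)
  thus "sqrt (1 - R\<^sup>2) \<in> \<rat>" by simp
next
  assume "sqrt (1 - R\<^sup>2) \<in> \<rat>"
  then obtain p q :: int where q: "q > 0" and pq: "sqrt (1 - R\<^sup>2) = of_int p / of_int q"
    using Rats_cases' by metis
  define P where "P = 2 * pi * R * of_int q"
  have Ppos: "P > 0" unfolding P_def using q assms(1) by simp
  have LP: "tr_lambda R * P = 2 * pi * of_int p"
    unfolding P_def tr_lambda_def pq using q assms(1) by (simp add: field_simps)
  have PR: "P / R = 2 * pi * of_int q" unfolding P_def using assms(1) by simp
  have "\<forall>t. circular_tractrix R c1 c2 (t + P) = circular_tractrix R c1 c2 t"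
  proof
    fix t
    have e1: "tr_lambda R * (t + P) = tr_lambda R * t + 2 * pi * of_int p"
      using LP by (simp add: distrib_left)
    have e2: "(t + P) / R = t / R + 2 * pi * of_int q" using PR by (simp add: add_divide_distrib)
    show "circular_tractrix R c1 c2 (t + P) = circular_tractrix R c1 c2 t"
      unfolding circular_tractrix_def tr_xi1_def tr_xi2_def tr_xi3_def e1 e2 cos_shift sin_shift ..
  qed
  thus "\<exists>P>0. \<forall>t. circular_tractrix R c1 c2 (t + P) = circular_tractrix R c1 c2 t"
    using Ppos by blast
qed

end
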